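(* Consider the ODE system $S_h'=\Lambda_h-\beta_vI_vS_h-\mu_hS_h$, $I_h'=\beta_vI_vS_h-(\mu_h+\delta+r_1)I_h$, $R_h'=r_1I_h-\mu_hR_h$, $S_v'=\Lambda_v-\beta_hS_vI_h-\mu_vS_v$, $I_v'=\beta_hS_vI_h-\mu_vI_v$, with constant parameters $\Lambda_h,\Lambda_v,\mu_h,\mu_v>0$ and $\beta_h,\beta_v,\delta,r_1\geq0$, and let $\mathcal{R}_0=\sqrt{\frac{\beta_hS_v^0}{\mu_h+\delta+r_1}\cdot\frac{\beta_vS_h^0}{\mu_v}}$ with $S_v^0=\Lambda_v/\mu_v$, $S_h^0=\Lambda_h/\mu_h$. Assume $\mathcal{R}_0>1$. Then the unique endemic equilibrium $E^*$ (the unique nonnegative equilibrium other than $(S_h^0,0,0,S_v^0,0)$) is locally asymptotically stable.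
   Context: This ODE is the age-integrated version of an age-structured malaria model in the case without loss of immunity ($r_2=0$) and with age-independent parameters. *)

theory Defs
  imports "HOL-Analysis.Analysis"
begin

type_synonym state = "real \<times> real \<times> real \<times> real \<times> real"
  (* (S_h, I_h, R_h, S_v, I_v) *)

definition malaria_field ::
  "real \<Rightarrow> real \<Rightarrow> real \<Rightarrow> real \<Rightarrow> real \<Rightarrow> real \<Rightarrow> real \<Rightarrow> real \<Rightarrow> state \<Rightarrow> state" where
  "malaria_field Lh Lv muh muv bh bv dl r1 =
     (\<lambda>(Sh, Ih, Rh, Sv, Iv).
        (Lh - bv * Iv * Sh - muh * Sh,
         bv * Iv * Sh - (muh + dl + r1) * Ih,
         r1 * Ih - muh * Rh,
         Lv - bh * Sv * Ih - muv * Sv,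
         bh * Sv * Ih - muv * Iv))"

definition R0 :: "real \<Rightarrow> real \<Rightarrow> real \<Rightarrow> real \<Rightarrow> real \<Rightarrow> real \<Rightarrow> real \<Rightarrow> real \<Rightarrow> real" where
  "R0 Lh Lv muh muv bh bv dl r1 =
     sqrt ((bh * (Lv / muv)) / (muh + dl + r1) * ((bv * (Lh / muh)) / muv))"

definition disease_free_eq :: "real \<Rightarrow> real \<Rightarrow> real \<Rightarrow> real \<Rightarrow> state" where
  "disease_free_eq Lh Lv muh muv = (Lh / muh, 0, 0, Lv / muv, 0)"

definition nonneg_state :: "state \<Rightarrow> bool" where
  "nonneg_state = (\<lambda>(Sh, Ih, Rh, Sv, Iv). Sh \<ge> 0 \<and> Ih \<ge> 0 \<and> Rh \<ge> 0 \<and> Sv \<ge> 0 \<and> Iv \<ge> 0)"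

definition is_solution :: "('a::real_normed_vector \<Rightarrow> 'a) \<Rightarrow> (real \<Rightarrow> 'a) \<Rightarrow> bool" where
  "is_solution f x \<longleftrightarrow> (\<forall>t\<ge>0. (x has_vector_derivative f (x t)) (at t within {0..}))"

definition loc_asym_stable :: "('a::real_normed_vector \<Rightarrow> 'a) \<Rightarrow> 'a \<Rightarrow> bool" where
  "loc_asym_stable f e \<longleftrightarrow>
     f e = 0 \<and>
     (\<forall>\<epsilon>>0. \<exists>\<delta>>0. \<forall>x. is_solution f x \<and> dist (x 0) e < \<delta> \<longrightarrow> (\<forall>t\<ge>0. dist (x t) e < \<epsilon>)) \<and>
     (\<exists>\<eta>>0. \<forall>x. is_solution f x \<and> dist (x 0) e < \<eta> \<longrightarrow> (x \<longlongrightarrow> e) at_top)"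

end

theory Submission
  imports Defs
begin

lemma lyap_decr:
  fixes f :: "'a::real_normed_vector \<Rightarrow> 'a" and V :: "'a \<Rightarrow> real"
  assumes sol: "is_solution f x"
    and deriv: "\<And>y. (V has_derivative DV y) (at y)"
    and reg: "\<And>s. 0 < s \<Longrightarrow> s < t \<Longrightarrow> DV (x s) (f (x s)) \<le> - c * V (x s)"
    and t: "t \<ge> 0"
  shows "exp (c * t) * V (x t) \<le> V (x 0)"
proof (cases "t = 0")
  case True then show ?thesis by simp
next
  case False
  with t have tp: "0 < t" by simp
  define h where "h s = exp (c * s) * V (x s)" for s
  have xd: "(x has_vector_derivative f (x s)) (at s within {0..})" if "s \<ge> 0" for s
    using sol that unfolding is_solution_def by blast
  have xc: "continuous_on {0..} x"
    using xd by (auto intro!: continuous_on_vector_derivative)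
  have Vc: "continuous_on UNIV V"
    using deriv by (meson has_derivative_continuous_on)
  have hc: "continuous_on {0..t} h"
  proof -
    have "continuous_on {0..t} x" using xc by (rule continuous_on_subset) auto
    then have "continuous_on {0..t} (\<lambda>s. V (x s))"
      using continuous_on_compose2[OF Vc] by blast
    moreover have "continuous_on {0..t} (\<lambda>s. exp (c * s))"
      by (intro continuous_on_exp continuous_on_mult continuous_on_const continuous_on_id)
    ultimately show ?thesis unfolding h_def by (rule continuous_on_mult[rotated])
  qed
  have hd: "(h has_real_derivative exp (c * s) * (c * V (x s) + DV (x s) (f (x s)))) (at s)"
    if "0 < s" for s
  proof -
    have "(x has_vector_derivative f (x s)) (at s within {0<..})"
      using xd[of s] that by (auto intro: has_vector_derivative_within_subset)
    then have "(x has_vector_derivative f (x s)) (at s)"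
      using that at_within_open[of s "{0<..}"] by simp
    then have "(x has_derivative (\<lambda>h. h *\<^sub>R f (x s))) (at s)"
      by (simp add: has_vector_derivative_def)
    from has_derivative_compose[OF this deriv]
    have "((\<lambda>s. V (x s)) has_derivative (\<lambda>h. DV (x s) (h *\<^sub>R f (x s)))) (at s)" .
    moreover have "DV (x s) (h *\<^sub>R f (x s)) = h * DV (x s) (f (x s))" for h
      using has_derivative_linear[OF deriv[of "x s"]] by (simp add: linear_scale)
    ultimately have "((\<lambda>s. V (x s)) has_real_derivative DV (x s) (f (x s))) (at s)"
      by (simp add: has_field_derivative_def mult.commute[of _ "DV (x s) (f (x s))"])
    moreover have "((\<lambda>s. exp (c * s)) has_real_derivative exp (c * s) * c) (at s)"
      by (auto intro!: derivative_eq_intros)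
    ultimately show ?thesis unfolding h_def using DERIV_mult by (fastforce simp: algebra_simps)
  qed
  have "\<forall>z. 0 < z \<and> z < t \<longrightarrow> h differentiable (at z)"
    using hd real_differentiable_def by blast
  then obtain l z where z: "0 < z" "z < t" "DERIV h z :> l" "h t - h 0 = (t - 0) * l"
    using MVT[OF tp hc] by blast
  have "l = exp (c * z) * (c * V (x z) + DV (x z) (f (x z)))"
    using DERIV_unique[OF z(3) hd[OF z(1)]] .
  moreover have "c * V (x z) + DV (x z) (f (x z)) \<le> 0" using reg[OF z(1,2)] by simp
  ultimately have "l \<le> 0" by (simp add: mult_nonneg_nonpos)
  moreover have "t * l \<le> 0" using \<open>l \<le> 0\<close> tp by (simp add: mult_nonneg_nonpos)
  ultimately have "h t \<le> h 0" using z(4) by simp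
  then show ?thesis by (simp add: h_def)
qed

lemma exp_neg_lim: "(c::real) > 0 \<Longrightarrow> ((\<lambda>t. exp (- c * t)) \<longlongrightarrow> 0) at_top"
proof -
  assume c: "c > 0"
  have "LIM t at_top. (\<lambda>_. - c) t * t :> at_bot"
    by (rule filterlim_tendsto_neg_mult_at_bot[OF tendsto_const]) (use c in \<open>auto intro: filterlim_ident\<close>)
  from filterlim_compose[OF exp_at_bot this] show ?thesis by simp
qed

lemma lyap_las:
  fixes f :: "'a::real_normed_vector \<Rightarrow> 'a" and V :: "'a \<Rightarrow> real"
  assumes fe: "f e = 0"
   and deriv: "\<And>y. (V has_derivative DV y) (at y)"
   and lo: "\<And>y. m * (dist y e)^2 \<le> V y" and hi: "\<And>y. V y \<le> M * (dist y e)^2"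
   and m: "m > 0" and M: "M > 0"
   and dec: "\<And>y. dist y e < r \<Longrightarrow> DV y (f y) \<le> - c * V y" and r: "r > 0" and c: "c > 0"
  shows "loc_asym_stable f e"
proof -
  define d0 where "d0 = r * sqrt (m / (2*M))"
  have d0: "d0 > 0" using r m M by (simp add: d0_def)
  have d0sq: "M * d0^2 = m * r^2 / 2"
    using m M by (simp add: d0_def power_mult_distrib)
  define \<rho> where "\<rho> = m * r^2"
  have Vnn: "V y \<ge> 0" for y using lo[of y] m by (smt (verit) zero_le_power2 mult_nonneg_nonneg)
  have reg: "DV y (f y) \<le> - c * V y" if "V y < \<rho>" for y
  proof -
    have "m * (dist y e)^2 < m * r^2" using lo[of y] that by (simp add: \<rho>_def)
    then have "(dist y e)^2 < r^2" using m by simp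
    then have "dist y e < r" using r by (smt (verit) power_mono zero_le_dist)
    then show ?thesis by (rule dec)
  qed
  have key: "exp (c * t) * V (x t) \<le> V (x 0)"
    if sol: "is_solution f x" and x0: "dist (x 0) e < d0" and t: "t \<ge> 0" for x t
  proof -
    have "(dist (x 0) e)^2 < d0^2" using x0 by (simp add: power_strict_mono)
    then have "M * (dist (x 0) e)^2 < M * d0^2" using M by simp
    moreover have "M * (dist (x 0) e)^2 \<ge> 0" using M by simp
    moreover have "m * r^2 > 0" using m r by simp
    ultimately have V0: "V (x 0) < \<rho>" using hi[of "x 0"] d0sq unfolding \<rho>_def by linarith
    have xd: "(x has_vector_derivative f (x s)) (at s within {0..})" if "s \<ge> 0" for s
      using sol that unfolding is_solution_def by blast
    have xc: "continuous_on {0..} x"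
      using xd by (auto intro!: continuous_on_vector_derivative)
    have Vc: "continuous_on UNIV V"
      using deriv by (meson has_derivative_continuous_on)
    have all: "V (x s) < \<rho>" if s: "s \<ge> 0" for s
    proof (rule ccontr)
      assume "\<not> V (x s) < \<rho>"
      define A where "A = {0..s} \<inter> (\<lambda>u. V (x u)) -` {\<rho>..}"
      have "continuous_on {0..s} x" using xc by (rule continuous_on_subset) auto
      then have "continuous_on {0..s} (\<lambda>u. V (x u))"
        using continuous_on_compose2[OF Vc] by blast
      then have clA: "closed A" unfolding A_def
        by (intro continuous_closed_preimage) auto
      have sA: "s \<in> A" using s \<open>\<not> V (x s) < \<rho>\<close> by (simp add: A_def)
      have bA: "bdd_below A" unfolding A_def by (rule bdd_belowI[of _ 0]) auto
      define T where "T = Inf A"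
      have TA: "T \<in> A" unfolding T_def using closed_contains_Inf[OF _ bA clA] sA by blast
      have below: "V (x u) < \<rho>" if "0 < u" "u < T" for u
      proof (rule ccontr)
        assume "\<not> V (x u) < \<rho>"
        moreover have "T \<le> s" using TA by (simp add: A_def)
        ultimately have "u \<in> A" using that by (simp add: A_def)
        then have "T \<le> u" unfolding T_def using bA by (rule cInf_lower)
        then show False using that by simp
      qed
      have T0: "T \<ge> 0" using TA by (simp add: A_def)
      have "exp (c * T) * V (x T) \<le> V (x 0)"
        by (rule lyap_decr[OF sol deriv _ T0]) (use below reg in auto)
      moreover have "V (x T) \<le> exp (c * T) * V (x T)"
        using Vnn[of "x T"] T0 c by (simp add: mult_le_cancel_right1)
      ultimately have "V (x T) < \<rho>" using V0 by simp
      then show False using TA by (simp add: A_def)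
    qed
    show ?thesis
      by (rule lyap_decr[OF sol deriv _ t]) (use all reg in auto)
  qed
  have bound: "m * (dist (x t) e)^2 \<le> exp (- c * t) * (M * (dist (x 0) e)^2)"
    if sol: "is_solution f x" and x0: "dist (x 0) e < d0" and t: "t \<ge> 0" for x t
  proof -
    have "exp (c * t) * V (x t) \<le> M * (dist (x 0) e)^2"
      using key[OF that] hi[of "x 0"] by simp
    then have "V (x t) \<le> exp (- c * t) * (M * (dist (x 0) e)^2)"
      by (simp add: exp_minus field_simps)
    then show ?thesis using lo[of "x t"] by simp
  qed
  have stab: "\<forall>\<epsilon>>0. \<exists>\<delta>>0. \<forall>x. is_solution f x \<and> dist (x 0) e < \<delta> \<longrightarrow> (\<forall>t\<ge>0. dist (x t) e < \<epsilon>)"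
  proof (intro allI impI)
    fix \<epsilon> :: real assume e: "\<epsilon> > 0"
    define \<delta> where "\<delta> = min d0 (\<epsilon> * sqrt (m / M))"
    have \<delta>: "\<delta> > 0" using d0 e m M by (simp add: \<delta>_def)
    show "\<exists>\<delta>>0. \<forall>x. is_solution f x \<and> dist (x 0) e < \<delta> \<longrightarrow> (\<forall>t\<ge>0. dist (x t) e < \<epsilon>)"
    proof (intro exI[of _ \<delta>] conjI allI impI \<delta>)
      fix x and t :: real assume H: "is_solution f x \<and> dist (x 0) e < \<delta>" and t: "t \<ge> 0"
      have x0: "dist (x 0) e < d0" using H by (simp add: \<delta>_def)
      have "dist (x 0) e < \<epsilon> * sqrt (m / M)" using H by (simp add: \<delta>_def)
      then have "(dist (x 0) e)^2 < (\<epsilon> * sqrt (m / M))^2" by (simp add: power_strict_mono)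
      also have "\<dots> = \<epsilon>^2 * m / M" using m M by (simp add: power_mult_distrib)
      finally have "M * (dist (x 0) e)^2 < \<epsilon>^2 * m" using M by (simp add: field_simps)
      moreover have "exp (- c * t) \<le> 1" using c t by simp
      ultimately have "exp (- c * t) * (M * (dist (x 0) e)^2) < \<epsilon>^2 * m"
      proof -
        have "exp (- c * t) * (M * (dist (x 0) e)^2) \<le> 1 * (M * (dist (x 0) e)^2)"
          by (rule mult_right_mono) (use \<open>exp (- c * t) \<le> 1\<close> M in auto)
        then show ?thesis using \<open>M * (dist (x 0) e)^2 < \<epsilon>^2 * m\<close> by linarith
      qed
      moreover have "m * (dist (x t) e)^2 \<le> exp (- c * t) * (M * (dist (x 0) e)^2)"
        using bound[of x t] x0 t H by blast
      ultimately have "m * (dist (x t) e)^2 < \<epsilon>^2 * m" by linarith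
      then have "(dist (x t) e)^2 < \<epsilon>^2" using m by (simp add: mult.commute[of m])
      then show "dist (x t) e < \<epsilon>" using e by (meson power_less_imp_less_base less_le)
    qed
  qed
  have attr: "\<forall>x. is_solution f x \<and> dist (x 0) e < d0 \<longrightarrow> (x \<longlongrightarrow> e) at_top"
  proof (intro allI impI)
    fix x assume H: "is_solution f x \<and> dist (x 0) e < d0"
    define K where "K = M * (dist (x 0) e)^2 / m"
    have ev: "\<forall>\<^sub>F t in at_top. (dist (x t) e)^2 \<le> K * exp (- c * t)"
    proof (rule eventually_at_top_linorderI[of 0])
      fix t :: real assume "t \<ge> 0"
      then have "m * (dist (x t) e)^2 \<le> exp (- c * t) * (M * (dist (x 0) e)^2)" using bound[of x t] H by blast
      then show "(dist (x t) e)^2 \<le> K * exp (- c * t)" using m by (simp add: K_def field_simps)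
    qed
    have lim0: "((\<lambda>t. K * exp (- c * t)) \<longlongrightarrow> 0) at_top"
      using tendsto_mult[OF tendsto_const exp_neg_lim[OF c], of K] by simp
    have "((\<lambda>t. (dist (x t) e)^2) \<longlongrightarrow> 0) at_top"
      by (rule tendsto_sandwich[OF _ ev tendsto_const lim0]) simp
    then have "((\<lambda>t. sqrt ((dist (x t) e)^2)) \<longlongrightarrow> sqrt 0) at_top"
      by (rule tendsto_real_sqrt)
    then have "((\<lambda>t. dist (x t) e) \<longlongrightarrow> 0) at_top" by simp
    then show "(x \<longlongrightarrow> e) at_top" using tendsto_dist_iff by blast
  qed
  show ?thesis unfolding loc_asym_stable_def using fe stab attr d0 by blast
qed

lemma prod3_bound:
  fixes a b c r :: real
  assumes "\<bar>a\<bar> \<le> r"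
  shows "b * c * a \<le> r * (b^2 + c^2) / 2"
proof -
  have "b * c * a \<le> \<bar>b * c * a\<bar>" by (rule abs_ge_self)
  also have "\<dots> = \<bar>b * c\<bar> * \<bar>a\<bar>" by (simp add: abs_mult)
  also have "\<dots> \<le> \<bar>b * c\<bar> * r" using assms by (simp add: mult_left_mono)
  also have "\<bar>b * c\<bar> \<le> (b^2 + c^2) / 2"
    using sum_squares_bound[of b c] sum_squares_bound[of b "-c"] by (auto simp: abs_if algebra_simps)
  then have "\<bar>b * c\<bar> * r \<le> (b^2 + c^2) / 2 * r" using assms by (intro mult_right_mono) auto
  finally show ?thesis by (simp add: ac_simps)
qed

lemma core_ineq:
  fixes p q a mh mv g \<epsilon> \<beta> r0 x1 x2 x3 x4 z :: real
  assumes pos: "p > 0" "q > 0" "a > 0" "mh > 0" "mv > 0" "g \<ge> 0"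
    and eps: "\<epsilon> > 0" "4 * ((p+mh)^2/(2*p) + 2*mv) * \<epsilon> \<le> 1" "(mv + p) * \<epsilon> \<le> 1" "2 * mv * \<epsilon> \<le> 1"
    and bet: "\<beta> > 0" "16 * \<beta> * g^2 \<le> (\<epsilon> * p / 2) * mh"
    and r0: "128 * r0 \<le> \<epsilon> * p / 2"
    and xb: "\<bar>x1\<bar> \<le> r0" "\<bar>x2\<bar> \<le> r0" "\<bar>x3\<bar> \<le> r0" "\<bar>x4\<bar> \<le> r0"
  shows "2*x1*(-(p+mh)*x1 - p*x4 - p*x1*x4)/p + 2*x2*(a*(x1 + x4 - x2 + x1*x4))/a
       + 2*x3*(-(q+mv)*x3 - q*x2 - q*x2*x3)/q + 2*x4*(mv*(x2 + x3 - x4 + x2*x3))/mv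
       + \<epsilon>*((-(p+mh)*x1 - p*x4 - p*x1*x4)*x4 + x1*(mv*(x2 + x3 - x4 + x2*x3)))
       + 2*\<beta>*z*(g*x2 - mh*z)
     \<le> - (\<epsilon> * p / 64) * (x1^2 + x2^2 + x3^2 + x4^2) - \<beta> * mh * z^2"
proof -
  define \<eta> where "\<eta> = \<epsilon> * p / 2"
  define w1 where "w1 = x1 + x4 - x2"
  define w2 where "w2 = x3 + x2 - x4"
  define S where "S = x1^2 + x2^2 + x3^2 + x4^2"
  define K1 where "K1 = (p+mh)^2/(2*p) + 2*mv"
  define L where "L = - p*x4^2 - (p+mh)*x1*x4 + mv*x1*(x2+x3-x4)"
  define C where "C = -2*x1^2*x4 + 2*x1*x2*x4 - 2*x2*x3^2 + 2*x2*x3*x4 + \<epsilon>*(mv*x1*x2*x3 - p*x1*x4^2)"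
  define Q0 where "Q0 = -2*(mh/p)*x1^2 - 2*(mv/q)*x3^2 - (x1^2+x3^2) - w1^2 - w2^2"
  define Z where "Z = 2*\<beta>*z*(g*x2 - mh*z)"
  have ident: "2*x1*(-(p+mh)*x1 - p*x4 - p*x1*x4)/p + 2*x2*(a*(x1 + x4 - x2 + x1*x4))/a
       + 2*x3*(-(q+mv)*x3 - q*x2 - q*x2*x3)/q + 2*x4*(mv*(x2 + x3 - x4 + x2*x3))/mv
       + \<epsilon>*((-(p+mh)*x1 - p*x4 - p*x1*x4)*x4 + x1*(mv*(x2 + x3 - x4 + x2*x3)))
       + 2*\<beta>*z*(g*x2 - mh*z) = Q0 + \<epsilon> * L + C + Z"
    using pos unfolding Q0_def L_def C_def Z_def w1_def w2_def
    by (simp add: field_simps power2_eq_square)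
  have L_eq: "L = - p*x4^2 - (p+mh)*x1*x4 + mv*x1^2 - mv*x1*w1 + mv*x1*x3"
    unfolding L_def w1_def by (simp add: algebra_simps power2_eq_square)
  have b1: "- (p+mh)*x1*x4 \<le> (p/2)*x4^2 + ((p+mh)^2/(2*p))*x1^2"
  proof -
    have eq: "(p/2)*x4^2 + ((p+mh)^2/(2*p))*x1^2 + (p+mh)*x1*x4 = (p*x4 + (p+mh)*x1)^2/(2*p)"
      using pos by (simp add: field_simps power2_eq_square)
    have "(p*x4 + (p+mh)*x1)^2/(2*p) \<ge> 0" using pos by simp
    then show ?thesis using eq by linarith
  qed
  have b2: "- mv*x1*w1 \<le> mv*(x1^2 + w1^2)/2"
    using prod3_bound[of "-mv" "mv" x1 w1] pos by (simp add: algebra_simps)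
  have b3: "mv*x1*x3 \<le> mv*(x1^2 + x3^2)/2"
    using prod3_bound[of "mv" "mv" x1 x3] pos by (simp add: algebra_simps)
  have LB: "L \<le> -(p/2)*x4^2 + K1*x1^2 + (mv/2)*(w1^2 + x3^2)"
    using L_eq b1 b2 b3 unfolding K1_def by (simp add: algebra_simps)
  have K1p: "K1 \<ge> 0" unfolding K1_def using pos by simp
  have epsL: "\<epsilon> * L \<le> - (\<eta>*x4^2) + x1^2/4 + w1^2/4 + x3^2/4"
  proof -
    have "\<epsilon> * L \<le> \<epsilon> * (-(p/2)*x4^2 + K1*x1^2 + (mv/2)*(w1^2 + x3^2))"
      using LB eps by (simp add: mult_left_mono)
    also have "\<dots> = - (\<eta>*x4^2) + (\<epsilon>*K1)*x1^2 + (\<epsilon>*mv/2)*(w1^2 + x3^2)"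
      unfolding \<eta>_def by (simp add: algebra_simps)
    also have "\<dots> \<le> - (\<eta>*x4^2) + (1/4)*x1^2 + (1/4)*(w1^2 + x3^2)"
    proof -
      have "\<epsilon>*K1 \<le> 1/4" using eps(2) unfolding K1_def by (simp add: algebra_simps)
      then have "(\<epsilon>*K1)*x1^2 \<le> (1/4)*x1^2" by (intro mult_right_mono) simp_all
      moreover have "\<epsilon>*mv/2 \<le> 1/4"
        using eps(4) by (simp add: algebra_simps)
      then have "(\<epsilon>*mv/2)*(w1^2 + x3^2) \<le> (1/4)*(w1^2 + x3^2)" by (intro mult_right_mono) simp_all
      ultimately show ?thesis by linarith
    qed
    finally show ?thesis by (simp add: algebra_simps)
  qed
  have eta: "\<eta> > 0" "\<eta> \<le> 1/2" unfolding \<eta>_def using eps pos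
  proof -
    show "\<epsilon> * p / 2 > 0" using eps pos by simp
    have "\<epsilon> * mv \<ge> 0" using eps pos by simp
    then show "\<epsilon> * p / 2 \<le> 1/2" using eps(3) by (simp add: algebra_simps)
  qed
  have QL: "Q0 + \<epsilon> * L \<le> -(3/4)*x1^2 - (3/4)*x3^2 - (3/4)*w1^2 - \<eta>*x4^2"
  proof -
    have "(mh/p)*x1^2 \<ge> 0" "(mv/q)*x3^2 \<ge> 0" "w2^2 \<ge> 0" using pos by simp_all
    moreover have "Q0 = -(2*((mh/p)*x1^2)) - 2*((mv/q)*x3^2) - w2^2 - x1^2 - x3^2 - w1^2"
      unfolding Q0_def by (simp add: algebra_simps)
    ultimately show ?thesis using epsL by linarith
  qed
  have x2b: "x2^2 \<le> 3*(x1^2 + x4^2 + w1^2)"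
  proof -
    have "x2 = x1 + x4 - w1" unfolding w1_def by simp
    moreover have "(x1 + x4 - w1)^2 \<le> 3*(x1^2 + x4^2 + w1^2)"
      using sum_squares_bound[of x1 x4] sum_squares_bound[of x1 "-w1"] sum_squares_bound[of x4 "-w1"]
      by (simp add: power2_eq_square algebra_simps)
    ultimately show ?thesis by simp
  qed
  have QL2: "-(3/4)*x1^2 - (3/4)*x3^2 - (3/4)*w1^2 - \<eta>*x4^2 \<le> - ((\<eta>/8) * S)"
  proof -
    have "\<eta> * x2^2 \<le> \<eta> * (3*(x1^2 + x4^2 + w1^2))" using x2b eta by (simp add: mult_left_mono)
    then have a: "\<eta> * x2^2 \<le> 3*(\<eta> * x1^2) + 3*(\<eta> * x4^2) + 3*(\<eta> * w1^2)" by (simp add: algebra_simps)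
    have b: "\<eta> * x1^2 \<le> (1/2) * x1^2" "\<eta> * x3^2 \<le> (1/2) * x3^2" "\<eta> * w1^2 \<le> (1/2) * w1^2"
      by (rule mult_right_mono; use eta in simp)+
    have c: "- ((\<eta>/8) * S) = -(\<eta> * x1^2)/8 - (\<eta> * x2^2)/8 - (\<eta> * x3^2)/8 - (\<eta> * x4^2)/8"
      unfolding S_def by (simp add: algebra_simps)
    have d: "\<eta> * x4^2 \<ge> 0" "x1^2 \<ge> 0" "x3^2 \<ge> 0" "w1^2 \<ge> 0" using eta by simp_all
    show ?thesis unfolding c using a b d by linarith
  qed
  have ZB: "Z \<le> - (\<beta> * mh * z^2) + (\<eta>/16) * x2^2"
  proof -
    define P where "P = g*x2*z"
    define U where "U = z^2"
    define Wx where "Wx = x2^2"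
    define G where "G = g^2/mh"
    have "0 \<le> (mh*z - g*x2)^2" by simp
    then have "2*mh*(g*x2*z) \<le> mh^2*z^2 + g^2*x2^2" by (simp add: power2_eq_square algebra_simps)
    then have A: "2*P \<le> mh*U + G*Wx" unfolding P_def U_def G_def Wx_def using pos
      by (simp add: field_simps power2_eq_square)
    have B: "\<beta>*(2*P) \<le> \<beta>*(mh*U + G*Wx)" using A bet by (simp add: mult_left_mono)
    have B1: "\<beta>*(2*P) = 2*(\<beta>*P)" "\<beta>*(mh*U + G*Wx) = \<beta>*mh*U + (\<beta>*G)*Wx" by (simp_all add: algebra_simps)
    have "\<beta>*G \<le> \<eta>/16" using bet(2) pos unfolding \<eta>_def G_def by (simp add: field_simps)
    then have C: "(\<beta>*G)*Wx \<le> (\<eta>/16)*Wx" unfolding Wx_def by (intro mult_right_mono) simp_all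
    have D: "Z = 2*(\<beta>*P) - 2*(\<beta>*mh*U)" unfolding Z_def P_def U_def by (simp add: algebra_simps power2_eq_square)
    show ?thesis using B B1 C D unfolding U_def[symmetric] Wx_def[symmetric] by linarith
  qed
  have CB: "C \<le> 4 * r0 * S"
  proof -
    have r0p: "r0 \<ge> 0" using xb by linarith
    have em: "\<epsilon>*mv \<le> 1" "\<epsilon>*p \<le> 1" "\<epsilon>*mv \<ge> 0" "\<epsilon>*p \<ge> 0" using eps pos
      by (simp_all add: algebra_simps) (smt (verit) mult_pos_pos)+
    have c1: "- (x1^2*x4) \<le> r0*x1^2"
      using prod3_bound[of "-x4" r0 x1 x1] xb by (simp add: power2_eq_square)
    have c2: "x1*x2*x4 \<le> (r0*x1^2)/2 + (r0*x2^2)/2"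
      using prod3_bound[of x4 r0 x1 x2] xb by (simp add: algebra_simps)
    have c3: "- (x2*x3^2) \<le> r0*x3^2"
      using prod3_bound[of "-x2" r0 x3 x3] xb by (simp add: power2_eq_square algebra_simps)
    have c4: "x2*x3*x4 \<le> (r0*x3^2)/2 + (r0*x4^2)/2"
      using prod3_bound[of x2 r0 x3 x4] xb by (simp add: algebra_simps)
    have c5: "x1*x2*x3 \<le> (r0*x1^2)/2 + (r0*x2^2)/2"
      using prod3_bound[of x3 r0 x1 x2] xb by (simp add: algebra_simps)
    have c6: "- (x1*x4^2) \<le> r0*x4^2"
      using prod3_bound[of "-x1" r0 x4 x4] xb by (simp add: power2_eq_square algebra_simps)
    have e5: "(\<epsilon>*mv)*(x1*x2*x3) \<le> (\<epsilon>*mv)*(r0*x1^2)/2 + (\<epsilon>*mv)*(r0*x2^2)/2"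
    proof -
      have "(\<epsilon>*mv)*(x1*x2*x3) \<le> (\<epsilon>*mv)*((r0*x1^2)/2 + (r0*x2^2)/2)"
        using c5 em by (intro mult_left_mono) auto
      then show ?thesis by (simp add: algebra_simps)
    qed
    have e6: "- ((\<epsilon>*p)*(x1*x4^2)) \<le> (\<epsilon>*p)*(r0*x4^2)"
    proof -
      have "(\<epsilon>*p)*(- (x1*x4^2)) \<le> (\<epsilon>*p)*(r0*x4^2)"
        using c6 em by (intro mult_left_mono) auto
      then show ?thesis by simp
    qed
    have f1: "(\<epsilon>*mv)*(r0*x1^2) \<le> r0*x1^2" "(\<epsilon>*mv)*(r0*x2^2) \<le> r0*x2^2"
      "(\<epsilon>*p)*(r0*x4^2) \<le> r0*x4^2"
      by (rule mult_left_le_one_le; use em r0p in simp)+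
    have g: "r0*x1^2 \<ge> 0" "r0*x2^2 \<ge> 0" "r0*x3^2 \<ge> 0" "r0*x4^2 \<ge> 0" using r0p by simp_all
    have CE: "C = -2*(x1^2*x4) + 2*(x1*x2*x4) - 2*(x2*x3^2) + 2*(x2*x3*x4) + (\<epsilon>*mv)*(x1*x2*x3) - (\<epsilon>*p)*(x1*x4^2)"
      unfolding C_def by (simp add: algebra_simps)
    have SE: "4 * r0 * S = 4*(r0*x1^2) + 4*(r0*x2^2) + 4*(r0*x3^2) + 4*(r0*x4^2)"
      unfolding S_def by (simp add: algebra_simps)
    show ?thesis unfolding CE SE using c1 c2 c3 c4 e5 e6 f1 g by linarith
  qed
  have CB': "C \<le> (\<eta>*S)/32"
  proof -
    have "4 * r0 * S \<le> (\<eta>/32) * S"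
      using r0 unfolding \<eta>_def S_def by (intro mult_right_mono) auto
    then show ?thesis using CB by (simp add: algebra_simps)
  qed
  have QL2': "-(3/4)*x1^2 - (3/4)*x3^2 - (3/4)*w1^2 - \<eta>*x4^2 \<le> -(\<eta>*S)/8"
    using QL2 by (simp add: algebra_simps)
  have ZB': "Z \<le> - (\<beta> * mh * z^2) + (\<eta>*x2^2)/16"
    using ZB by (simp add: algebra_simps)
  have x2S: "\<eta>*x2^2 \<le> \<eta>*S" using eta unfolding S_def by (intro mult_left_mono) auto
  have fin: "Q0 + \<epsilon> * L + C + Z \<le> -(\<eta>*S)/32 - \<beta> * mh * z^2"
    using QL QL2' ZB' CB' x2S by linarith
  have rhs: "- (\<epsilon> * p / 64) * (x1^2 + x2^2 + x3^2 + x4^2) - \<beta> * mh * z^2 = -(\<eta>*S)/32 - \<beta> * mh * z^2"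
    unfolding \<eta>_def S_def by (simp add: algebra_simps)
  show ?thesis unfolding rhs ident using fin .
qed

lemma V_bounds:
  fixes c1 c2 c3 c4 \<epsilon> \<beta> mlo Mhi x1 x2 x3 x4 z :: real
  assumes "\<epsilon> > 0" "\<epsilon> \<le> c1" "\<epsilon> \<le> c4"
    and lo: "mlo \<le> c1/2" "mlo \<le> c2" "mlo \<le> c3" "mlo \<le> c4/2" "mlo \<le> \<beta>"
    and hi: "3/2*c1 \<le> Mhi" "c2 \<le> Mhi" "c3 \<le> Mhi" "3/2*c4 \<le> Mhi" "\<beta> \<le> Mhi"
  shows "mlo * (x1^2 + x2^2 + x3^2 + x4^2 + z^2)
           \<le> c1*x1^2 + c2*x2^2 + c3*x3^2 + c4*x4^2 + \<epsilon>*(x1*x4) + \<beta>*z^2"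
    and "c1*x1^2 + c2*x2^2 + c3*x3^2 + c4*x4^2 + \<epsilon>*(x1*x4) + \<beta>*z^2
           \<le> Mhi * (x1^2 + x2^2 + x3^2 + x4^2 + z^2)"
proof -
  have h1: "- (\<epsilon>*(x1*x4)) \<le> (\<epsilon>/2)*x1^2 + (\<epsilon>/2)*x4^2"
    using prod3_bound[of "-\<epsilon>" \<epsilon> x1 x4] assms(1) by (simp add: algebra_simps)
  have h1': "\<epsilon>*(x1*x4) \<le> (\<epsilon>/2)*x1^2 + (\<epsilon>/2)*x4^2"
    using prod3_bound[of "\<epsilon>" \<epsilon> x1 x4] assms(1) by (simp add: algebra_simps)
  have h2: "(\<epsilon>/2)*x1^2 \<le> (c1/2)*x1^2" "(\<epsilon>/2)*x4^2 \<le> (c4/2)*x4^2"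
    by (rule mult_right_mono; use assms in simp)+
  have h4: "mlo*x1^2 \<le> (c1/2)*x1^2" "mlo*x2^2 \<le> c2*x2^2" "mlo*x3^2 \<le> c3*x3^2"
     "mlo*x4^2 \<le> (c4/2)*x4^2" "mlo*z^2 \<le> \<beta>*z^2"
    by (rule mult_right_mono; use assms in simp)+
  have h5: "(3/2*c1)*x1^2 \<le> Mhi*x1^2" "c2*x2^2 \<le> Mhi*x2^2" "c3*x3^2 \<le> Mhi*x3^2"
     "(3/2*c4)*x4^2 \<le> Mhi*x4^2" "\<beta>*z^2 \<le> Mhi*z^2"
    by (rule mult_right_mono; use assms in simp)+
  have e: "c1*x1^2 = 2*((c1/2)*x1^2)" "c4*x4^2 = 2*((c4/2)*x4^2)"
    "(3/2*c1)*x1^2 = 3*((c1/2)*x1^2)" "(3/2*c4)*x4^2 = 3*((c4/2)*x4^2)"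
    "mlo * (x1^2 + x2^2 + x3^2 + x4^2 + z^2) = mlo*x1^2 + mlo*x2^2 + mlo*x3^2 + mlo*x4^2 + mlo*z^2"
    "Mhi * (x1^2 + x2^2 + x3^2 + x4^2 + z^2) = Mhi*x1^2 + Mhi*x2^2 + Mhi*x3^2 + Mhi*x4^2 + Mhi*z^2"
    by (simp_all add: algebra_simps)
  show "mlo * (x1^2 + x2^2 + x3^2 + x4^2 + z^2)
           \<le> c1*x1^2 + c2*x2^2 + c3*x3^2 + c4*x4^2 + \<epsilon>*(x1*x4) + \<beta>*z^2"
    using h1 h2 h4 e by linarith
  show "c1*x1^2 + c2*x2^2 + c3*x3^2 + c4*x4^2 + \<epsilon>*(x1*x4) + \<beta>*z^2
           \<le> Mhi * (x1^2 + x2^2 + x3^2 + x4^2 + z^2)"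
    using h1' h2 h5 e by linarith
qed

lemma dist5_sq:
  fixes a1 a2 a3 a4 a5 b1 b2 b3 b4 b5 :: real
  shows "(dist (a1,a2,a3,a4,a5) (b1,b2,b3,b4,b5))^2 = (a1-b1)^2 + (a2-b2)^2 + (a3-b3)^2 + (a4-b4)^2 + (a5-b5)^2"
  by (simp add: dist_Pair_Pair dist_real_def)

lemma dist_comp_le:
  fixes y E :: "real\<times>real\<times>real\<times>real\<times>real"
  shows "\<bar>fst y - fst E\<bar> \<le> dist y E" "\<bar>fst (snd y) - fst (snd E)\<bar> \<le> dist y E"
    "\<bar>fst (snd (snd y)) - fst (snd (snd E))\<bar> \<le> dist y E"
    "\<bar>fst (snd (snd (snd y))) - fst (snd (snd (snd E)))\<bar> \<le> dist y E"
    "\<bar>snd (snd (snd (snd y))) - snd (snd (snd (snd E)))\<bar> \<le> dist y E"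
proof -
  obtain a1 a2 a3 a4 a5 where y: "y = (a1,a2,a3,a4,a5)" by (cases y) auto
  obtain b1 b2 b3 b4 b5 where E: "E = (b1,b2,b3,b4,b5)" by (cases E) auto
  have d: "(dist y E)^2 = (a1-b1)^2 + (a2-b2)^2 + (a3-b3)^2 + (a4-b4)^2 + (a5-b5)^2"
    unfolding y E by (rule dist5_sq)
  have "\<bar>u\<bar> \<le> dist y E" if "u^2 \<le> (dist y E)^2" for u
    using that abs_le_square_iff[of u "dist y E"] by simp
  moreover have "(a1-b1)^2 \<le> (dist y E)^2" "(a2-b2)^2 \<le> (dist y E)^2" "(a3-b3)^2 \<le> (dist y E)^2"
    "(a4-b4)^2 \<le> (dist y E)^2" "(a5-b5)^2 \<le> (dist y E)^2"
    unfolding d by (simp_all add: add_nonneg_nonneg)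
  ultimately show "\<bar>fst y - fst E\<bar> \<le> dist y E" "\<bar>fst (snd y) - fst (snd E)\<bar> \<le> dist y E"
    "\<bar>fst (snd (snd y)) - fst (snd (snd E))\<bar> \<le> dist y E"
    "\<bar>fst (snd (snd (snd y))) - fst (snd (snd (snd E)))\<bar> \<le> dist y E"
    "\<bar>snd (snd (snd (snd y))) - snd (snd (snd (snd E)))\<bar> \<le> dist y E"
    unfolding y E by auto
qed

lemma field_comps:
  fixes Lh Lv muh muv bh bv dl r1 Sh Ih Rh Sv Iv y1 y2 y3 y4 y5 x1 x2 x3 x4 z :: real
  assumes pos: "Sh > 0" "Ih > 0" "Sv > 0" "Iv > 0"
    and e1: "Lh = bv*Iv*Sh + muh*Sh" and e2: "bv*Iv*Sh = (muh+dl+r1)*Ih" and e3: "r1*Ih = muh*Rh"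
    and e4: "Lv = bh*Sv*Ih + muv*Sv" and e5: "bh*Sv*Ih = muv*Iv"
    and x1_def: "x1 = (1/Sh)*(y1 - Sh)" and x2_def: "x2 = (1/Ih)*(y2 - Ih)" and x3_def: "x3 = (1/Sv)*(y4 - Sv)"
    and x4_def: "x4 = (1/Iv)*(y5 - Iv)" and z_def: "z = y3 - Rh"
  shows "(1/Sh)*(Lh - bv*y5*y1 - muh*y1) = -(bv*Iv+muh)*x1 - (bv*Iv)*x4 - (bv*Iv)*x1*x4"
    and "(1/Ih)*(bv*y5*y1 - (muh+dl+r1)*y2) = (muh+dl+r1)*(x1 + x4 - x2 + x1*x4)"
    and "r1*y2 - muh*y3 = (r1*Ih)*x2 - muh*z"
    and "(1/Sv)*(Lv - bh*y4*y2 - muv*y4) = -(bh*Ih+muv)*x3 - (bh*Ih)*x2 - (bh*Ih)*x2*x3"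
    and "(1/Iv)*(bh*y4*y2 - muv*y5) = muv*(x2 + x3 - x4 + x2*x3)"
proof -
  have y1: "y1 = Sh*(1+x1)" and y2: "y2 = Ih*(1+x2)" and y4: "y4 = Sv*(1+x3)" and y5: "y5 = Iv*(1+x4)"
    and y3: "y3 = Rh + z"
    using pos unfolding x1_def x2_def x3_def x4_def z_def by (simp_all add: field_simps)
  show "(1/Sh)*(Lh - bv*y5*y1 - muh*y1) = -(bv*Iv+muh)*x1 - (bv*Iv)*x4 - (bv*Iv)*x1*x4"
    unfolding y1 y5 e1 using pos by (simp add: field_simps; (simp add: algebra_simps)?)
  show "(1/Ih)*(bv*y5*y1 - (muh+dl+r1)*y2) = (muh+dl+r1)*(x1 + x4 - x2 + x1*x4)"
  proof -
    have "bv*y5*y1 = (bv*Iv*Sh)*((1+x4)*(1+x1))" unfolding y1 y5 by (simp add: algebra_simps)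
    then have "bv*y5*y1 = (muh+dl+r1)*Ih*((1+x4)*(1+x1))" using e2 by simp
    then show ?thesis unfolding y2 using pos by (simp add: field_simps; (simp add: algebra_simps)?)
  qed
  show "r1*y2 - muh*y3 = (r1*Ih)*x2 - muh*z"
    unfolding y2 y3 using e3 by (simp add: algebra_simps)
  show "(1/Sv)*(Lv - bh*y4*y2 - muv*y4) = -(bh*Ih+muv)*x3 - (bh*Ih)*x2 - (bh*Ih)*x2*x3"
    unfolding y4 y2 e4 using pos by (simp add: field_simps; (simp add: algebra_simps)?)
  show "(1/Iv)*(bh*y4*y2 - muv*y5) = muv*(x2 + x3 - x4 + x2*x3)"
  proof -
    have "bh*y4*y2 = (bh*Sv*Ih)*((1+x3)*(1+x2))" unfolding y4 y2 by (simp add: algebra_simps)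
    then have "bh*y4*y2 = muv*Iv*((1+x3)*(1+x2))" using e5 by simp
    then show ?thesis unfolding y5 using pos by (simp add: field_simps; (simp add: algebra_simps)?)
  qed
qed

lemma las_at_eq:
  fixes Lh Lv muh muv bh bv dl r1 Sh Ih Rh Sv Iv :: real
  assumes pos: "muh > 0" "muv > 0" "dl \<ge> 0" "r1 \<ge> 0" "Sh > 0" "Ih > 0" "Sv > 0" "Iv > 0"
    and e1: "Lh = bv*Iv*Sh + muh*Sh" and e2: "bv*Iv*Sh = (muh+dl+r1)*Ih" and e3: "r1*Ih = muh*Rh"
    and e4: "Lv = bh*Sv*Ih + muv*Sv" and e5: "bh*Sv*Ih = muv*Iv"
  shows "loc_asym_stable (malaria_field Lh Lv muh muv bh bv dl r1) (Sh,Ih,Rh,Sv,Iv)"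
proof -
  define f where "f = malaria_field Lh Lv muh muv bh bv dl r1"
  define E where "E = (Sh,Ih,Rh,Sv,Iv)"
  define a where "a = muh+dl+r1"
  define p where "p = bv*Iv"
  define q where "q = bh*Ih"
  define g where "g = r1*Ih"
  have a: "a > 0" using pos by (simp add: a_def)
  have p: "p > 0"
  proof -
    have "p*Sh > 0" using e2 a pos by (simp add: p_def a_def)
    then show ?thesis using pos by (simp add: zero_less_mult_iff)
  qed
  have q: "q > 0"
  proof -
    have "q*Sv > 0" using e5 pos by (simp add: q_def algebra_simps)
    then show ?thesis using pos by (simp add: zero_less_mult_iff)
  qed
  have g: "g \<ge> 0" using pos by (simp add: g_def)
  define K1 where "K1 = (p+muh)^2/(2*p) + 2*muv"
  have K1: "K1 \<ge> 0" using p pos by (simp add: K1_def)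
  define Dn where "Dn = 4*K1 + 2*muv + 2*p"
  have Dn: "Dn > 0" using K1 p pos by (simp add: Dn_def)
  define \<epsilon> where "\<epsilon> = 1/Dn"
  have eps: "\<epsilon> > 0" "4*((p+muh)^2/(2*p) + 2*muv)*\<epsilon> \<le> 1" "(muv+p)*\<epsilon> \<le> 1"
    "2*muv*\<epsilon> \<le> 1" "\<epsilon> \<le> 1/p" "\<epsilon> \<le> 1/muv"
  proof -
    show "\<epsilon> > 0" using Dn by (simp add: \<epsilon>_def)
    show "4*((p+muh)^2/(2*p) + 2*muv)*\<epsilon> \<le> 1"
      using Dn K1 p pos unfolding \<epsilon>_def K1_def[symmetric] by (simp add: Dn_def)
    show "(muv+p)*\<epsilon> \<le> 1" using Dn K1 p pos by (simp add: \<epsilon>_def Dn_def)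
    show "2*muv*\<epsilon> \<le> 1" using Dn K1 p pos by (simp add: \<epsilon>_def Dn_def)
    show "\<epsilon> \<le> 1/p" using Dn K1 p pos unfolding \<epsilon>_def by (intro divide_left_mono) (simp_all add: Dn_def)
    show "\<epsilon> \<le> 1/muv" using Dn K1 p pos unfolding \<epsilon>_def by (intro divide_left_mono) (simp_all add: Dn_def)
  qed
  define \<beta> where "\<beta> = (\<epsilon>*p/2)*muh/(16*(g^2+1))"
  have "g^2 \<ge> 0" by simp
  then have g21: "g^2+1 > 0" by linarith
  have bet: "\<beta> > 0" "16*\<beta>*g^2 \<le> (\<epsilon>*p/2)*muh"
  proof -
    show "\<beta> > 0" using g21 eps p pos unfolding \<beta>_def by (intro divide_pos_pos mult_pos_pos) auto
    have "16*\<beta>*g^2 = ((\<epsilon>*p/2)*muh) * (g^2/(g^2+1))"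
      using g21 by (simp add: \<beta>_def field_simps)
    also have "\<dots> \<le> ((\<epsilon>*p/2)*muh) * 1"
      using eps p pos g21 by (intro mult_left_mono) simp_all
    finally show "16*\<beta>*g^2 \<le> (\<epsilon>*p/2)*muh" by simp
  qed
  define r0 where "r0 = \<epsilon>*p/256"
  have r0: "r0 > 0" "128*r0 \<le> \<epsilon>*p/2" using eps p by (simp_all add: r0_def)
  define c1 where "c1 = 1/p"
  define c2 where "c2 = 1/a"
  define c3 where "c3 = 1/q"
  define c4 where "c4 = 1/muv"
  define mlo where "mlo = min (min (c1/2) c2) (min (min c3 (c4/2)) \<beta>)"
  define Mhi where "Mhi = 3/2*c1 + c2 + c3 + 3/2*c4 + \<beta>"
  have cpos: "c1 > 0" "c2 > 0" "c3 > 0" "c4 > 0" using p a q pos by (simp_all add: c1_def c2_def c3_def c4_def)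
  have mlo: "mlo > 0" using cpos bet by (simp add: mlo_def)
  have Mhi: "Mhi > 0" using cpos bet by (simp add: Mhi_def)
  define k1 where "k1 = 1/Sh"
  define k2 where "k2 = 1/Ih"
  define k3 where "k3 = 1/Sv"
  define k4 where "k4 = 1/Iv"
  define X1 where "X1 = (\<lambda>y::real\<times>real\<times>real\<times>real\<times>real. k1 * (fst y - Sh))"
  define X2 where "X2 = (\<lambda>y::real\<times>real\<times>real\<times>real\<times>real. k2 * (fst (snd y) - Ih))"
  define Zc where "Zc = (\<lambda>y::real\<times>real\<times>real\<times>real\<times>real. fst (snd (snd y)) - Rh)"
  define X3 where "X3 = (\<lambda>y::real\<times>real\<times>real\<times>real\<times>real. k3 * (fst (snd (snd (snd y))) - Sv))"
  define X4 where "X4 = (\<lambda>y::real\<times>real\<times>real\<times>real\<times>real. k4 * (snd (snd (snd (snd y))) - Iv))"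
  define V where "V = (\<lambda>y. c1*(X1 y * X1 y) + c2*(X2 y * X2 y) + c3*(X3 y * X3 y) + c4*(X4 y * X4 y)
      + \<epsilon>*(X1 y * X4 y) + \<beta>*(Zc y * Zc y))"
  define DV where "DV = (\<lambda>y h::real\<times>real\<times>real\<times>real\<times>real. 2*c1*X1 y*(k1 * fst h) + 2*c2*X2 y*(k2 * fst (snd h))
        + 2*c3*X3 y*(k3 * fst (snd (snd (snd h))))
        + 2*c4*X4 y*(k4 * snd (snd (snd (snd h))))
        + \<epsilon>*((k1 * fst h)*X4 y + X1 y*(k4 * snd (snd (snd (snd h)))))
        + 2*\<beta>*Zc y*fst (snd (snd h)))"
  have deriv: "(V has_derivative DV y) (at y)" for y
    unfolding V_def DV_def X1_def X2_def X3_def X4_def Zc_def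
    by (auto intro!: derivative_eq_intros ext simp: algebra_simps)
  define \<Sigma> where "\<Sigma> y = (X1 y)^2 + (X2 y)^2 + (X3 y)^2 + (X4 y)^2 + (Zc y)^2" for y
  have V\<Sigma>: "mlo * \<Sigma> y \<le> V y" "V y \<le> Mhi * \<Sigma> y" for y
  proof -
    have vb: "mlo * ((X1 y)^2 + (X2 y)^2 + (X3 y)^2 + (X4 y)^2 + (Zc y)^2)
           \<le> c1*(X1 y)^2 + c2*(X2 y)^2 + c3*(X3 y)^2 + c4*(X4 y)^2 + \<epsilon>*(X1 y*X4 y) + \<beta>*(Zc y)^2"
      "c1*(X1 y)^2 + c2*(X2 y)^2 + c3*(X3 y)^2 + c4*(X4 y)^2 + \<epsilon>*(X1 y*X4 y) + \<beta>*(Zc y)^2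
           \<le> Mhi * ((X1 y)^2 + (X2 y)^2 + (X3 y)^2 + (X4 y)^2 + (Zc y)^2)"
    proof -
      have mh: "mlo \<le> c1/2" "mlo \<le> c2" "mlo \<le> c3" "mlo \<le> c4/2" "mlo \<le> \<beta>" by (simp_all add: mlo_def)
      have Mh: "3/2*c1 \<le> Mhi" "c2 \<le> Mhi" "c3 \<le> Mhi" "3/2*c4 \<le> Mhi" "\<beta> \<le> Mhi"
        unfolding Mhi_def using cpos bet by linarith+
      have ec: "\<epsilon> \<le> c1" "\<epsilon> \<le> c4" using eps by (simp_all add: c1_def c4_def)
      show "mlo * ((X1 y)^2 + (X2 y)^2 + (X3 y)^2 + (X4 y)^2 + (Zc y)^2)
           \<le> c1*(X1 y)^2 + c2*(X2 y)^2 + c3*(X3 y)^2 + c4*(X4 y)^2 + \<epsilon>*(X1 y*X4 y) + \<beta>*(Zc y)^2"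
        by (rule V_bounds(1)[OF eps(1) ec mh Mh])
      show "c1*(X1 y)^2 + c2*(X2 y)^2 + c3*(X3 y)^2 + c4*(X4 y)^2 + \<epsilon>*(X1 y*X4 y) + \<beta>*(Zc y)^2
           \<le> Mhi * ((X1 y)^2 + (X2 y)^2 + (X3 y)^2 + (X4 y)^2 + (Zc y)^2)"
        by (rule V_bounds(2)[OF eps(1) ec mh Mh])
    qed
    then show "mlo * \<Sigma> y \<le> V y" "V y \<le> Mhi * \<Sigma> y"
      unfolding \<Sigma>_def V_def by (simp_all add: power2_eq_square)
  qed
  have fE: "f E = 0"
    unfolding f_def E_def malaria_field_def using e1 e2 e3 e4 e5 by (simp add: zero_prod_def algebra_simps)
  have distE: "(dist y E)^2 = Sh^2*(X1 y)^2 + Ih^2*(X2 y)^2 + (Zc y)^2 + Sv^2*(X3 y)^2 + Iv^2*(X4 y)^2" for y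
  proof -
    obtain y1 y2 y3 y4 y5 where y: "y = (y1,y2,y3,y4,y5)" by (cases y) auto
    have "Sh * X1 y = y1 - Sh" "Ih * X2 y = y2 - Ih" "Sv * X3 y = y4 - Sv" "Iv * X4 y = y5 - Iv" "Zc y = y3 - Rh"
      using pos by (simp_all add: X1_def X2_def X3_def X4_def Zc_def y k1_def k2_def k3_def k4_def)
    then have "(y1 - Sh)^2 = Sh^2*(X1 y)^2" "(y2 - Ih)^2 = Ih^2*(X2 y)^2" "(y4 - Sv)^2 = Sv^2*(X3 y)^2"
      "(y5 - Iv)^2 = Iv^2*(X4 y)^2" "(y3 - Rh)^2 = (Zc y)^2"
      by (metis power_mult_distrib)+
    then show ?thesis unfolding y E_def dist5_sq by simp
  qed
  define kl where "kl = min (min (Sh^2) (Ih^2)) (min (min (Sv^2) (Iv^2)) 1)"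
  define kh where "kh = Sh^2 + Ih^2 + 1 + Sv^2 + Iv^2"
  have kl: "kl > 0" using pos by (simp add: kl_def)
  have "Sh^2 \<ge> 0" "Ih^2 \<ge> 0" "Sv^2 \<ge> 0" "Iv^2 \<ge> 0" by simp_all
  then have kh: "kh > 0" unfolding kh_def by linarith
  have d\<Sigma>: "kl * \<Sigma> y \<le> (dist y E)^2" "(dist y E)^2 \<le> kh * \<Sigma> y" for y
  proof -
    have l: "kl*(X1 y)^2 \<le> Sh^2*(X1 y)^2" "kl*(X2 y)^2 \<le> Ih^2*(X2 y)^2" "kl*(Zc y)^2 \<le> 1*(Zc y)^2"
      "kl*(X3 y)^2 \<le> Sv^2*(X3 y)^2" "kl*(X4 y)^2 \<le> Iv^2*(X4 y)^2"
      by (rule mult_right_mono; simp add: kl_def)+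
    have "Sh^2 \<ge> 0" "Ih^2 \<ge> 0" "Sv^2 \<ge> 0" "Iv^2 \<ge> 0" by simp_all
    then have kk: "Sh^2 \<le> kh" "Ih^2 \<le> kh" "1 \<le> kh" "Sv^2 \<le> kh" "Iv^2 \<le> kh" unfolding kh_def by linarith+
    have h: "Sh^2*(X1 y)^2 \<le> kh*(X1 y)^2" "Ih^2*(X2 y)^2 \<le> kh*(X2 y)^2" "1*(Zc y)^2 \<le> kh*(Zc y)^2"
      "Sv^2*(X3 y)^2 \<le> kh*(X3 y)^2" "Iv^2*(X4 y)^2 \<le> kh*(X4 y)^2"
      by (rule mult_right_mono; use kk in simp)+
    have e: "kl * \<Sigma> y = kl*(X1 y)^2 + kl*(X2 y)^2 + kl*(X3 y)^2 + kl*(X4 y)^2 + kl*(Zc y)^2"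
      "kh * \<Sigma> y = kh*(X1 y)^2 + kh*(X2 y)^2 + kh*(X3 y)^2 + kh*(X4 y)^2 + kh*(Zc y)^2"
      unfolding \<Sigma>_def by (simp_all add: algebra_simps)
    show "kl * \<Sigma> y \<le> (dist y E)^2" "(dist y E)^2 \<le> kh * \<Sigma> y"
      unfolding distE e using l h by linarith+
  qed
  have lo: "(mlo/kh) * (dist y E)^2 \<le> V y" for y
  proof -
    have "(mlo/kh) * (dist y E)^2 \<le> (mlo/kh) * (kh * \<Sigma> y)"
      using d\<Sigma>(2)[of y] mlo kh by (intro mult_left_mono) simp_all
    also have "\<dots> = mlo * \<Sigma> y" using kh by simp
    finally show ?thesis using V\<Sigma>(1)[of y] by linarith
  qed
  have hi: "V y \<le> (Mhi/kl) * (dist y E)^2" for y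
  proof -
    have "\<Sigma> y \<le> (dist y E)^2 / kl" using d\<Sigma>(1)[of y] kl by (simp add: field_simps)
    then have "Mhi * \<Sigma> y \<le> Mhi * ((dist y E)^2 / kl)" using Mhi by (intro mult_left_mono) simp_all
    then show ?thesis using V\<Sigma>(2)[of y] by simp
  qed
  define r where "r = r0 * min (min Sh Ih) (min Sv Iv)"
  have r: "r > 0" using r0 pos by (simp add: r_def)
  define cc where "cc = min (\<epsilon> * p / 64) (\<beta> * muh)"
  have cc: "cc > 0" using eps p bet pos by (simp add: cc_def)
  have dec: "DV y (f y) \<le> - (cc/Mhi) * V y" if dy: "dist y E < r" for y
  proof -
    obtain y1 y2 y3 y4 y5 where y: "y = (y1,y2,y3,y4,y5)" by (cases y) auto
    define x1 where "x1 = (1/Sh)*(y1 - Sh)"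
    define x2 where "x2 = (1/Ih)*(y2 - Ih)"
    define x3 where "x3 = (1/Sv)*(y4 - Sv)"
    define x4 where "x4 = (1/Iv)*(y5 - Iv)"
    define z where "z = y3 - Rh"
    have X: "X1 y = x1" "X2 y = x2" "X3 y = x3" "X4 y = x4" "Zc y = z"
      by (simp_all add: X1_def X2_def X3_def X4_def Zc_def y x1_def x2_def x3_def x4_def z_def
          k1_def k2_def k3_def k4_def)
    note dc = dist_comp_le[of y E, unfolded y E_def fst_conv snd_conv]
    have xb: "\<bar>x1\<bar> \<le> r0" "\<bar>x2\<bar> \<le> r0" "\<bar>x3\<bar> \<le> r0" "\<bar>x4\<bar> \<le> r0"
    proof -
      have rr: "r \<le> r0 * Sh" "r \<le> r0 * Ih" "r \<le> r0 * Sv" "r \<le> r0 * Iv"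
        unfolding r_def using r0 by (simp_all add: mult_left_mono)
      have dy': "dist (y1,y2,y3,y4,y5) (Sh,Ih,Rh,Sv,Iv) < r" using dy by (simp add: y E_def)
      have "\<bar>y1 - Sh\<bar> < r0 * Sh" using dc(1) dy' rr(1) by linarith
      moreover have "\<bar>y2 - Ih\<bar> < r0 * Ih" using dc(2) dy' rr(2) by linarith
      moreover have "\<bar>y4 - Sv\<bar> < r0 * Sv" using dc(4) dy' rr(3) by linarith
      moreover have "\<bar>y5 - Iv\<bar> < r0 * Iv" using dc(5) dy' rr(4) by linarith
      ultimately
      show "\<bar>x1\<bar> \<le> r0" "\<bar>x2\<bar> \<le> r0" "\<bar>x3\<bar> \<le> r0" "\<bar>x4\<bar> \<le> r0"
        using pos unfolding x1_def x2_def x3_def x4_def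
        by (simp_all add: abs_mult abs_divide field_simps)
    qed
    note fc = field_comps[OF pos(5-8) e1 e2 e3 e4 e5 x1_def x2_def x3_def x4_def z_def]
    have DVf: "DV y (f y) = 2*c1*x1*(-(bv*Iv+muh)*x1 - (bv*Iv)*x4 - (bv*Iv)*x1*x4)
        + 2*c2*x2*((muh+dl+r1)*(x1 + x4 - x2 + x1*x4))
        + 2*c3*x3*(-(bh*Ih+muv)*x3 - (bh*Ih)*x2 - (bh*Ih)*x2*x3)
        + 2*c4*x4*(muv*(x2 + x3 - x4 + x2*x3))
        + \<epsilon>*((-(bv*Iv+muh)*x1 - (bv*Iv)*x4 - (bv*Iv)*x1*x4)*x4 + x1*(muv*(x2 + x3 - x4 + x2*x3)))
        + 2*\<beta>*z*((r1*Ih)*x2 - muh*z)"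
    proof -
      have "DV y (f y) = 2*c1*X1 y*(k1 * (Lh - bv*y5*y1 - muh*y1)) + 2*c2*X2 y*(k2 * (bv*y5*y1 - (muh+dl+r1)*y2))
        + 2*c3*X3 y*(k3 * (Lv - bh*y4*y2 - muv*y4))
        + 2*c4*X4 y*(k4 * (bh*y4*y2 - muv*y5))
        + \<epsilon>*((k1 * (Lh - bv*y5*y1 - muh*y1))*X4 y + X1 y*(k4 * (bh*y4*y2 - muv*y5)))
        + 2*\<beta>*Zc y*(r1*y2 - muh*y3)"
        unfolding DV_def f_def y malaria_field_def by simp
      then show ?thesis unfolding X k1_def k2_def k3_def k4_def fc .
    qed
    have core: "DV y (f y) \<le> - (\<epsilon> * p / 64) * (x1^2 + x2^2 + x3^2 + x4^2) - \<beta> * muh * z^2"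
    proof -
      have "DV y (f y) = 2*x1*(-(p+muh)*x1 - p*x4 - p*x1*x4)/p + 2*x2*(a*(x1 + x4 - x2 + x1*x4))/a
       + 2*x3*(-(q+muv)*x3 - q*x2 - q*x2*x3)/q + 2*x4*(muv*(x2 + x3 - x4 + x2*x3))/muv
       + \<epsilon>*((-(p+muh)*x1 - p*x4 - p*x1*x4)*x4 + x1*(muv*(x2 + x3 - x4 + x2*x3)))
       + 2*\<beta>*z*(g*x2 - muh*z)"
        unfolding DVf c1_def c2_def c3_def c4_def p_def[symmetric] q_def[symmetric] a_def[symmetric] g_def[symmetric]
        by (simp add: divide_simps)
      also have "\<dots> \<le> - (\<epsilon> * p / 64) * (x1^2 + x2^2 + x3^2 + x4^2) - \<beta> * muh * z^2"
        by (rule core_ineq[OF p q a pos(1) pos(2) g eps(1-4) bet r0(2) xb])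
      finally show ?thesis .
    qed
    have "- (\<epsilon> * p / 64) * (x1^2 + x2^2 + x3^2 + x4^2) - \<beta> * muh * z^2 \<le> - cc * \<Sigma> y"
    proof -
      have "cc * (x1^2 + x2^2 + x3^2 + x4^2) \<le> (\<epsilon> * p / 64) * (x1^2 + x2^2 + x3^2 + x4^2)"
        by (rule mult_right_mono) (simp_all add: cc_def)
      moreover have "cc * z^2 \<le> (\<beta> * muh) * z^2"
        by (rule mult_right_mono) (simp_all add: cc_def)
      moreover have "cc * \<Sigma> y = cc * (x1^2 + x2^2 + x3^2 + x4^2) + cc * z^2"
        unfolding \<Sigma>_def X by (simp add: algebra_simps)
      ultimately show ?thesis by (simp add: algebra_simps)
    qed
    also have "- cc * \<Sigma> y \<le> - (cc/Mhi) * V y"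
    proof -
      have "(cc/Mhi) * V y \<le> (cc/Mhi) * (Mhi * \<Sigma> y)"
        using V\<Sigma>(2)[of y] cc Mhi by (intro mult_left_mono) simp_all
      then show ?thesis using Mhi by simp
    qed
    finally show ?thesis using core by linarith
  qed
  show ?thesis
    unfolding f_def[symmetric] E_def[symmetric]
    by (rule lyap_las[OF fE deriv lo hi _ _ dec r]) (use mlo kh Mhi kl cc in auto)
qed

lemma key_eq:
  fixes a muh muv bh bv Lh Lv I Sv Iv Sh :: real
  assumes pos: "a > 0" "muh > 0" "muv > 0" "bh > 0" "bv > 0" "Lh > 0" "Lv > 0" "I > 0"
    and dSv: "Sv = Lv/(muv+bh*I)" and dIv: "Iv = bh*Sv*I/muv" and dSh: "Sh = Lh/(muh+bv*Iv)"
  shows "bv*Iv*Sh = a*I \<longleftrightarrow> I*(a*bh*(muh*muv + bv*Lv)) = bh*bv*Lh*Lv - a*muh*muv^2"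
proof -
  have d1: "muv+bh*I > 0" using pos by (simp add: add_pos_pos)
  have Sv: "Sv > 0" using pos d1 dSv by simp
  have Iv: "Iv > 0" using pos Sv dIv by simp
  have d2: "muh+bv*Iv > 0" using pos Iv by (simp add: add_pos_pos)
  have nz: "muv+bh*I \<noteq> 0" "muv \<noteq> 0" using d1 pos by simp_all
  have IvE: "Iv*(muv*(muv+bh*I)) = bh*Lv*I"
  proof -
    have "Iv*(muv*(muv+bh*I)) = bh*(Sv*(muv+bh*I))*I" unfolding dIv using nz by (simp add: field_simps)
    also have "Sv*(muv+bh*I) = Lv" unfolding dSv using nz by simp
    finally show ?thesis by simp
  qed
  have "bv*Iv*Sh = a*I \<longleftrightarrow> bv*Iv*Lh = a*I*(muh + bv*Iv)"
    using d2 unfolding dSh by (simp add: field_simps)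
  also have "\<dots> \<longleftrightarrow> bv*Iv*(Lh - a*I) = a*I*muh" by (simp add: algebra_simps)
  also have "\<dots> \<longleftrightarrow> (bv*Iv*(Lh - a*I))*(muv*(muv+bh*I)) = (a*I*muh)*(muv*(muv+bh*I))"
    using d1 pos by simp
  also have "(bv*Iv*(Lh - a*I))*(muv*(muv+bh*I)) = bv*(Lh - a*I)*(Iv*(muv*(muv+bh*I)))"
    by (simp add: algebra_simps)
  also have "\<dots> = bv*(Lh - a*I)*(bh*Lv*I)" unfolding IvE ..
  also have "bv*(Lh - a*I)*(bh*Lv*I) = (a*I*muh)*(muv*(muv+bh*I))
       \<longleftrightarrow> I*(bv*(Lh - a*I)*(bh*Lv)) = I*((a*muh)*(muv*(muv+bh*I)))"
    by (simp add: algebra_simps)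
  also have "\<dots> \<longleftrightarrow> bv*(Lh - a*I)*(bh*Lv) = (a*muh)*(muv*(muv+bh*I))"
    using pos by simp
  also have "\<dots> \<longleftrightarrow> I*(a*bh*(muh*muv + bv*Lv)) = bh*bv*Lh*Lv - a*muh*muv^2"
    by (simp add: algebra_simps power2_eq_square) (auto simp: algebra_simps)
  finally show ?thesis .
qed

theorem theorem3p19:
  fixes Lh Lv muh muv bh bv dl r1 :: real
  assumes "Lh > 0" "Lv > 0" "muh > 0" "muv > 0"
    and "bh \<ge> 0" "bv \<ge> 0" "dl \<ge> 0" "r1 \<ge> 0"
    and "R0 Lh Lv muh muv bh bv dl r1 > 1"
  shows "\<exists>E. (nonneg_state E \<and> malaria_field Lh Lv muh muv bh bv dl r1 E = 0
                \<and> E \<noteq> disease_free_eq Lh Lv muh muv)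
           \<and> (\<forall>E'. nonneg_state E' \<and> malaria_field Lh Lv muh muv bh bv dl r1 E' = 0
                \<and> E' \<noteq> disease_free_eq Lh Lv muh muv \<longrightarrow> E' = E)
           \<and> loc_asym_stable (malaria_field Lh Lv muh muv bh bv dl r1) E"
proof -
  note A = assms
  define a where "a = muh+dl+r1"
  have a: "a > 0" using A by (simp add: a_def add_pos_nonneg)
  define N where "N = bh*bv*Lh*Lv - a*muh*muv^2"
  have X1: "(bh * (Lv / muv)) / (muh + dl + r1) * ((bv * (Lh / muh)) / muv) > 1"
  proof (rule ccontr)
    assume "\<not> ?thesis"
    then have "sqrt ((bh * (Lv / muv)) / (muh + dl + r1) * ((bv * (Lh / muh)) / muv)) \<le> 1"
      by simp
    then show False using A(9) unfolding R0_def by simp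
  qed
  have N: "N > 0"
  proof -
    have "(bh * (Lv / muv)) / a * ((bv * (Lh / muh)) / muv) = (bh*bv*Lh*Lv) / (a*muh*muv^2)"
      by (simp add: field_simps power2_eq_square)
    with X1 have "(bh*bv*Lh*Lv) / (a*muh*muv^2) > 1" unfolding a_def by simp
    moreover have "a*muh*muv^2 > 0" using a A by simp
    ultimately have "bh*bv*Lh*Lv > a*muh*muv^2" by (simp add: field_simps)
    then show ?thesis unfolding N_def by simp
  qed
  have bhbv: "bh > 0" "bv > 0"
  proof -
    have "bh*bv*Lh*Lv > 0" using N a A unfolding N_def
      by (smt (verit) mult_pos_pos zero_less_power)
    then have "bh \<noteq> 0" "bv \<noteq> 0" by auto
    then show "bh > 0" "bv > 0" using A by simp_all
  qed
  define D where "D = a*bh*(muh*muv + bv*Lv)"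
  have D: "D > 0" using a bhbv A by (simp add: D_def add_pos_pos)
  define I where "I = N/D"
  have I: "I > 0" using N D by (simp add: I_def)
  have ID: "I*D = N" using D by (simp add: I_def)
  define Sv where "Sv = Lv/(muv+bh*I)"
  define Iv where "Iv = bh*Sv*I/muv"
  define Sh where "Sh = Lh/(muh+bv*Iv)"
  define Rh where "Rh = r1*I/muh"
  have d1: "muv+bh*I > 0" using A bhbv I by (simp add: add_pos_pos)
  have Sv: "Sv > 0" using A d1 by (simp add: Sv_def)
  have Iv: "Iv > 0" using A bhbv Sv I by (simp add: Iv_def)
  have d2: "muh+bv*Iv > 0" using A bhbv Iv by (simp add: add_pos_pos)
  have Sh: "Sh > 0" using A d2 by (simp add: Sh_def)
  have Rh: "Rh \<ge> 0" using A I by (simp add: Rh_def)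
  have e1: "Lh = bv*Iv*Sh + muh*Sh"
  proof -
    have "(muh+bv*Iv)*Sh = Lh" using d2 by (simp add: Sh_def)
    then show ?thesis by (simp add: algebra_simps)
  qed
  have e2: "bv*Iv*Sh = (muh+dl+r1)*I"
    using key_eq[OF a A(3,4) bhbv A(1,2) I Sv_def Iv_def Sh_def] ID unfolding D_def N_def a_def by simp
  have e3: "r1*I = muh*Rh" using A by (simp add: Rh_def)
  have e4: "Lv = bh*Sv*I + muv*Sv"
  proof -
    have "(muv+bh*I)*Sv = Lv" using d1 by (simp add: Sv_def)
    then show ?thesis by (simp add: algebra_simps)
  qed
  have e5: "bh*Sv*I = muv*Iv" using A by (simp add: Iv_def)
  define E where "E = (Sh, I, Rh, Sv, Iv)"
  have fE: "malaria_field Lh Lv muh muv bh bv dl r1 E = 0"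
    unfolding E_def malaria_field_def using e1 e2 e3 e4 e5 by (simp add: zero_prod_def algebra_simps)
  have nnE: "nonneg_state E" using Sh I Rh Sv Iv by (simp add: nonneg_state_def E_def)
  have neE: "E \<noteq> disease_free_eq Lh Lv muh muv" using I by (simp add: E_def disease_free_eq_def)
  have uniq: "E' = E" if H: "nonneg_state E' \<and> malaria_field Lh Lv muh muv bh bv dl r1 E' = 0
                \<and> E' \<noteq> disease_free_eq Lh Lv muh muv" for E'
  proof -
    obtain S' I' R' V' W' where E': "E' = (S',I',R',V',W')" by (cases E') auto
    have nn: "S' \<ge> 0" "I' \<ge> 0" "R' \<ge> 0" "V' \<ge> 0" "W' \<ge> 0"
      using H unfolding E' nonneg_state_def by auto
    have fz: "Lh - bv*W'*S' - muh*S' = 0" "bv*W'*S' - (muh+dl+r1)*I' = 0" "r1*I' - muh*R' = 0"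
      "Lv - bh*V'*I' - muv*V' = 0" "bh*V'*I' - muv*W' = 0"
      using H unfolding E' malaria_field_def zero_prod_def by auto
    have ne: "(S',I',R',V',W') \<noteq> (Lh/muh, 0, 0, Lv/muv, 0)"
      using H unfolding E' disease_free_eq_def by auto
    have I'p: "I' > 0"
    proof (rule ccontr)
      assume "\<not> I' > 0"
      then have I0: "I' = 0" using nn by simp
      then have "W' = 0" using fz(5) A by simp
      moreover have "V' = Lv/muv" using fz(4) I0 A by (simp add: field_simps)
      moreover have "S' = Lh/muh" using fz(1) \<open>W' = 0\<close> A by (simp add: field_simps)
      moreover have "R' = 0" using fz(3) I0 A by simp
      ultimately show False using ne I0 by simp
    qed
    have d1': "muv+bh*I' > 0" using A bhbv I'p by (simp add: add_pos_pos)
    have V': "V' = Lv/(muv+bh*I')" using fz(4) d1' by (simp add: field_simps)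
    have W': "W' = bh*V'*I'/muv" using fz(5) A by (simp add: field_simps)
    have d2': "muh+bv*W' > 0" using A bhbv nn by (simp add: add_pos_nonneg)
    have S': "S' = Lh/(muh+bv*W')" using fz(1) d2' by (simp add: field_simps)
    have "bv*W'*S' = a*I'" using fz(2) unfolding a_def by simp
    then have "I'*D = N"
      using key_eq[OF a A(3,4) bhbv A(1,2) I'p V' W' S'] unfolding D_def N_def by simp
    then have II: "I' = I" using D ID by (simp add: I_def field_simps)
    have "V' = Sv" using V' II by (simp add: Sv_def)
    moreover have "W' = Iv" using W' II \<open>V' = Sv\<close> by (simp add: Iv_def)
    moreover have "S' = Sh" using S' \<open>W' = Iv\<close> by (simp add: Sh_def)
    moreover have "R' = Rh" using fz(3) II A by (simp add: Rh_def field_simps)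
    ultimately show ?thesis using II by (simp add: E' E_def)
  qed
  have las: "loc_asym_stable (malaria_field Lh Lv muh muv bh bv dl r1) E"
    unfolding E_def by (rule las_at_eq[OF A(3,4,7,8) Sh I Sv Iv e1 e2 e3 e4 e5])
  show ?thesis using nnE fE neE uniq las by blast
qed

end
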